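(* Let $\alpha>0$, $t_0>0$, $x_0,v_0\in\mathcal H$, let $x$ be a solution of the Cauchy problem $$\tfrac{\alpha}{t}\dot x(t)+\operatorname{proj}_{C(x(t))+\ddot x(t)}(0)=0\ (t>t_0),\qquad x(t_0)=x_0,\ \dot x(t_0)=v_0,$$ and let $z\in\mathcal H$. Let $\lambda\ge0$ and $\xi^*=\lambda(\alpha-1-\lambda)\ge0$, and define $$\mathcal E_{\lambda,\xi^*}(t)=t^2\min_{i=1,\dots,m}\big(f_i(x(t))-f_i(z)\big)+\tfrac12\|\lambda(x(t)-z)+t\dot x(t)\|^2+\tfrac{\xi^*}{2}\|x(t)-z\|^2 .$$ Then: (i) $\mathcal E_{\lambda,\xi^*}$ is differentiable at almost every $t\in[t_0,+\infty)$; (ii) for almost all $t\in[t_0,+\infty)$, $$\tfrac{d}{dt}\mathcal E_{\lambda,\xi^*}(t)\le(2-\lambda)t\min_{i}\big(f_i(x(t))-f_i(z)\big)-(\alpha-\lambda-1)t\|\dot x(t)\|^2;$$ (iii) for all $t\in[t_0,+\infty)$, $$\mathcal E_{\lambda,\xi^*}(t)-\mathcal E_{\lambda,\xi^*}(t_0)\le(2-\lambda)\int_{t_0}^t s\min_{i}\big(f_i(x(s))-f_i(z)\big)\,ds+\int_{t_0}^t s(\lambda+1-\alpha)\|\dot x(s)\|^2\,ds .$$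
   Context: $\mathcal H$ is a real Hilbert space. $f_1,\dots,f_m:\mathcal H\to\mathbb R$ are convex and continuously differentiable. $C(x)=\operatorname{co}\{\nabla f_i(x):i=1,\dots,m\}$. For a closed convex $K$, $\operatorname{proj}_K(y)=\arg\min_{w\in K}\|w-y\|^2$. A solution of the Cauchy problem is a function $x:[t_0,+\infty)\to\mathcal H$ such that: $x\in C^1([t_0,+\infty))$; $\dot x$ is absolutely continuous on $[t_0,T]$ for every $T\ge t_0$; there is a Bochner measurable $\ddot x$ with $\dot x(t)=\dot x(t_0)+\int_{t_0}^t\ddot x(s)\,ds$ for all $t$, and $\frac{d}{dt}\dot x=\ddot x$ a.e.; the equation holds for almost all $t\ge t_0$; and the initial conditions hold. *)

theory Defs
  imports "HOL-Analysis.Analysis"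
begin

definition proj :: "'a::real_inner set \<Rightarrow> 'a \<Rightarrow> 'a" where
  "proj K y = (SOME w. w \<in> K \<and> (\<forall>u\<in>K. (norm (w - y))\<^sup>2 \<le> (norm (u - y))\<^sup>2))"

text \<open>C(x) = co { grad f_i(x) : i = 1..m }, indices 0..m-1.\<close>
definition Cgrad :: "nat \<Rightarrow> (nat \<Rightarrow> 'a::real_inner \<Rightarrow> 'a) \<Rightarrow> 'a \<Rightarrow> 'a set" where
  "Cgrad m df x = convex hull ((\<lambda>i. df i x) ` {..<m})"

definition abs_continuous_on :: "real \<Rightarrow> real \<Rightarrow> (real \<Rightarrow> 'a::real_normed_vector) \<Rightarrow> bool" where
  "abs_continuous_on a b g \<longleftrightarrow>
     (\<forall>e>0. \<exists>d>0. \<forall>(n::nat) (l::nat \<Rightarrow> real) (r::nat \<Rightarrow> real).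
        (\<forall>k<n. a \<le> l k \<and> l k \<le> r k \<and> r k \<le> b) \<and>
        (\<forall>k. Suc k < n \<longrightarrow> r k \<le> l (Suc k)) \<and>
        (\<Sum>k<n. r k - l k) < d \<longrightarrow>
        (\<Sum>k<n. norm (g (r k) - g (l k))) < e)"

definition bochner_measurable_on :: "real set \<Rightarrow> (real \<Rightarrow> 'a::real_normed_vector) \<Rightarrow> bool" where
  "bochner_measurable_on S g \<longleftrightarrow>
     (\<exists>\<phi>::nat \<Rightarrow> real \<Rightarrow> 'a.
        (\<forall>n. finite (range (\<phi> n)) \<and> (\<forall>v. \<phi> n -` {v} \<in> sets lebesgue)) \<and>
        (AE t in lebesgue. t \<in> S \<longrightarrow> (\<lambda>n. \<phi> n t) \<longlonglongrightarrow> g t))"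

definition is_solution ::
  "real \<Rightarrow> nat \<Rightarrow> (nat \<Rightarrow> 'a::{real_inner,complete_space} \<Rightarrow> 'a) \<Rightarrow> real \<Rightarrow> 'a \<Rightarrow> 'a
   \<Rightarrow> (real \<Rightarrow> 'a) \<Rightarrow> (real \<Rightarrow> 'a) \<Rightarrow> (real \<Rightarrow> 'a) \<Rightarrow> bool" where
  "is_solution \<alpha> m df t0 x0 v0 x xd xdd \<longleftrightarrow>
     (\<forall>t\<ge>t0. (x has_vector_derivative xd t) (at t within {t0..})) \<and>
     continuous_on {t0..} xd \<and>
     (\<forall>T\<ge>t0. abs_continuous_on t0 T xd) \<and>
     bochner_measurable_on {t0..} xdd \<and>
     (\<forall>t\<ge>t0. (\<lambda>s. norm (xdd s)) integrable_on {t0..t} \<and>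
              (xdd has_integral (xd t - xd t0)) {t0..t}) \<and>
     (AE t in lborel. t \<ge> t0 \<longrightarrow> (xd has_vector_derivative xdd t) (at t)) \<and>
     (AE t in lborel. t > t0 \<longrightarrow>
        (\<alpha> / t) *\<^sub>R xd t + proj ((\<lambda>c. c + xdd t) ` Cgrad m df (x t)) 0 = 0) \<and>
     x t0 = x0 \<and> xd t0 = v0"

definition energy ::
  "nat \<Rightarrow> (nat \<Rightarrow> 'a::real_inner \<Rightarrow> real) \<Rightarrow> (real \<Rightarrow> 'a) \<Rightarrow> (real \<Rightarrow> 'a) \<Rightarrow> 'a \<Rightarrow> real \<Rightarrow> real \<Rightarrow> real \<Rightarrow> real" where
  "energy m f x xd z lam \<xi> t =
     t\<^sup>2 * Min ((\<lambda>i. f i (x t) - f i z) ` {..<m})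
     + 1/2 * (norm (lam *\<^sub>R (x t - z) + t *\<^sub>R xd t))\<^sup>2
     + \<xi>/2 * (norm (x t - z))\<^sup>2"

end

theory Submission
  imports Defs
begin


definition domd :: "real \<Rightarrow> real \<Rightarrow> (real \<Rightarrow> real \<Rightarrow> real) \<Rightarrow> (real \<Rightarrow> 'b::real_normed_vector) \<Rightarrow> bool" where
  "domd a b I P \<longleftrightarrow> (\<exists>K\<ge>0. \<exists>K'\<ge>0. \<forall>u v. a \<le> u \<longrightarrow> u \<le> v \<longrightarrow> v \<le> b \<longrightarrow>
      norm (P v - P u) \<le> K * (v - u) + K' * I u v)"

definition bnd :: "real \<Rightarrow> real \<Rightarrow> (real \<Rightarrow> 'b::real_normed_vector) \<Rightarrow> bool" where
  "bnd a b P \<longleftrightarrow> (\<exists>B\<ge>0. \<forall>s\<in>{a..b}. norm (P s) \<le> B)"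

definition Ipos :: "real \<Rightarrow> real \<Rightarrow> (real \<Rightarrow> real \<Rightarrow> real) \<Rightarrow> bool" where
  "Ipos a b I \<longleftrightarrow> (\<forall>u v. a \<le> u \<longrightarrow> u \<le> v \<longrightarrow> v \<le> b \<longrightarrow> 0 \<le> I u v)"

lemma domdE:
  assumes "domd a b I P"
  obtains K K' where "K \<ge> 0" "K' \<ge> 0"
    "\<And>u v. a \<le> u \<Longrightarrow> u \<le> v \<Longrightarrow> v \<le> b \<Longrightarrow> norm (P v - P u) \<le> K * (v - u) + K' * I u v"
  using assms unfolding domd_def by blast

lemma domdI:
  assumes "K \<ge> 0" "K' \<ge> 0"
    "\<And>u v. a \<le> u \<Longrightarrow> u \<le> v \<Longrightarrow> v \<le> b \<Longrightarrow> norm (P v - P u) \<le> K * (v - u) + K' * I u v"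
  shows "domd a b I P"
  using assms unfolding domd_def by blast

lemma bndE:
  assumes "bnd a b P"
  obtains B where "B \<ge> 0" "\<And>s. s \<in> {a..b} \<Longrightarrow> norm (P s) \<le> B"
  using assms unfolding bnd_def by blast

lemma domd_add:
  assumes "domd a b I P" "domd a b I Q"
  shows "domd a b I (\<lambda>s. P s + Q s)"
proof -
  obtain K1 K1' where 1: "K1 \<ge> 0" "K1' \<ge> 0"
    "\<And>u v. a \<le> u \<Longrightarrow> u \<le> v \<Longrightarrow> v \<le> b \<Longrightarrow> norm (P v - P u) \<le> K1 * (v - u) + K1' * I u v"
    using domdE[OF assms(1)] by blast
  obtain K2 K2' where 2: "K2 \<ge> 0" "K2' \<ge> 0"
    "\<And>u v. a \<le> u \<Longrightarrow> u \<le> v \<Longrightarrow> v \<le> b \<Longrightarrow> norm (Q v - Q u) \<le> K2 * (v - u) + K2' * I u v"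
    using domdE[OF assms(2)] by blast
  show ?thesis
  proof (rule domdI[of "K1 + K2" "K1' + K2'"])
    fix u v assume uv: "a \<le> u" "u \<le> v" "v \<le> b"
    have "norm ((P v + Q v) - (P u + Q u)) \<le> norm (P v - P u) + norm (Q v - Q u)"
      by (metis add_diff_add norm_triangle_ineq)
    also have "\<dots> \<le> (K1 + K2) * (v - u) + (K1' + K2') * I u v"
      using 1(3)[OF uv] 2(3)[OF uv] by (simp add: algebra_simps)
    finally show "norm ((P v + Q v) - (P u + Q u)) \<le> (K1 + K2) * (v - u) + (K1' + K2') * I u v" .
  qed (use 1 2 in auto)
qed

lemma domd_neg:
  assumes "domd a b I P"
  shows "domd a b I (\<lambda>s. - P s)"
  using assms unfolding domd_def by (metis minus_diff_minus norm_minus_cancel)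

lemma domd_diff:
  assumes "domd a b I P" "domd a b I Q"
  shows "domd a b I (\<lambda>s. P s - Q s)"
  using domd_add[OF assms(1) domd_neg[OF assms(2)]] by simp

lemma domd_scale:
  assumes "domd a b I P"
  shows "domd a b I (\<lambda>s. c *\<^sub>R P s)"
proof -
  obtain K K' where 1: "K \<ge> 0" "K' \<ge> 0"
    "\<And>u v. a \<le> u \<Longrightarrow> u \<le> v \<Longrightarrow> v \<le> b \<Longrightarrow> norm (P v - P u) \<le> K * (v - u) + K' * I u v"
    using domdE[OF assms(1)] by blast
  show ?thesis
  proof (rule domdI[of "\<bar>c\<bar> * K" "\<bar>c\<bar> * K'"])
    fix u v assume uv: "a \<le> u" "u \<le> v" "v \<le> b"
    have "norm (c *\<^sub>R P v - c *\<^sub>R P u) = \<bar>c\<bar> * norm (P v - P u)"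
      by (metis norm_scaleR scaleR_right_diff_distrib)
    also have "\<dots> \<le> \<bar>c\<bar> * (K * (v - u) + K' * I u v)"
      using 1(3)[OF uv] by (simp add: mult_left_mono)
    finally show "norm (c *\<^sub>R P v - c *\<^sub>R P u) \<le> \<bar>c\<bar> * K * (v - u) + \<bar>c\<bar> * K' * I u v"
      by (simp add: algebra_simps)
  qed (use 1 in auto)
qed

lemma domd_cmult:
  fixes P :: "real \<Rightarrow> real"
  assumes "domd a b I P"
  shows "domd a b I (\<lambda>s. c * P s)"
  using domd_scale[OF assms, of c] by simp

lemma domd_prod:
  fixes p :: "real \<Rightarrow> real" and Q :: "real \<Rightarrow> 'b::real_normed_vector"
  assumes "domd a b I p" "domd a b I Q" "bnd a b p" "bnd a b Q" "Ipos a b I"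
  shows "domd a b I (\<lambda>s. p s *\<^sub>R Q s)"
proof -
  obtain K1 K1' where 1: "K1 \<ge> 0" "K1' \<ge> 0"
    "\<And>u v. a \<le> u \<Longrightarrow> u \<le> v \<Longrightarrow> v \<le> b \<Longrightarrow> norm (p v - p u) \<le> K1 * (v - u) + K1' * I u v"
    using domdE[OF assms(1)] by blast
  obtain K2 K2' where 2: "K2 \<ge> 0" "K2' \<ge> 0"
    "\<And>u v. a \<le> u \<Longrightarrow> u \<le> v \<Longrightarrow> v \<le> b \<Longrightarrow> norm (Q v - Q u) \<le> K2 * (v - u) + K2' * I u v"
    using domdE[OF assms(2)] by blast
  obtain B1 where B1: "B1 \<ge> 0" "\<And>s. s \<in> {a..b} \<Longrightarrow> norm (p s) \<le> B1" using bndE[OF assms(3)] by blast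
  obtain B2 where B2: "B2 \<ge> 0" "\<And>s. s \<in> {a..b} \<Longrightarrow> norm (Q s) \<le> B2" using bndE[OF assms(4)] by blast
  show ?thesis
  proof (rule domdI[of "B1 * K2 + B2 * K1" "B1 * K2' + B2 * K1'"])
    fix u v assume uv: "a \<le> u" "u \<le> v" "v \<le> b"
    have I0: "0 \<le> I u v" using assms(5) uv by (auto simp: Ipos_def)
    have "p v *\<^sub>R Q v - p u *\<^sub>R Q u = p v *\<^sub>R (Q v - Q u) + (p v - p u) *\<^sub>R Q u"
      by (simp add: algebra_simps)
    then have "norm (p v *\<^sub>R Q v - p u *\<^sub>R Q u) \<le> norm (p v) * norm (Q v - Q u) + norm (p v - p u) * norm (Q u)"
      by (metis norm_scaleR norm_triangle_ineq real_norm_def)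
    also have "\<dots> \<le> B1 * (K2 * (v - u) + K2' * I u v) + (K1 * (v - u) + K1' * I u v) * B2"
    proof (intro add_mono mult_mono)
      show "norm (p v) \<le> B1" "norm (Q u) \<le> B2" using uv B1 B2 by auto
      show "norm (Q v - Q u) \<le> K2 * (v - u) + K2' * I u v" by (rule 2(3)[OF uv])
      show "norm (p v - p u) \<le> K1 * (v - u) + K1' * I u v" by (rule 1(3)[OF uv])
    qed (use B1 B2 1 2 uv I0 in auto)
    finally show "norm (p v *\<^sub>R Q v - p u *\<^sub>R Q u) \<le> (B1 * K2 + B2 * K1) * (v - u) + (B1 * K2' + B2 * K1') * I u v"
      by (simp add: algebra_simps)
  qed (use 1 2 B1 B2 in auto)
qed

lemma domd_mult:
  fixes p q :: "real \<Rightarrow> real"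
  assumes "domd a b I p" "domd a b I q" "bnd a b p" "bnd a b q" "Ipos a b I"
  shows "domd a b I (\<lambda>s. p s * q s)"
  using domd_prod[OF assms] by simp

lemma domd_norm2:
  fixes Q :: "real \<Rightarrow> 'b::real_inner"
  assumes "domd a b I Q" "bnd a b Q" "Ipos a b I"
  shows "domd a b I (\<lambda>s. (norm (Q s))\<^sup>2)"
proof -
  obtain K K' where 1: "K \<ge> 0" "K' \<ge> 0"
    "\<And>u v. a \<le> u \<Longrightarrow> u \<le> v \<Longrightarrow> v \<le> b \<Longrightarrow> norm (Q v - Q u) \<le> K * (v - u) + K' * I u v"
    using domdE[OF assms(1)] by blast
  obtain B where B: "B \<ge> 0" "\<And>s. s \<in> {a..b} \<Longrightarrow> norm (Q s) \<le> B" using bndE[OF assms(2)] by blast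
  show ?thesis
  proof (rule domdI[of "2 * B * K" "2 * B * K'"])
    fix u v assume uv: "a \<le> u" "u \<le> v" "v \<le> b"
    have I0: "0 \<le> I u v" using assms(3) uv by (auto simp: Ipos_def)
    have "(norm (Q v))\<^sup>2 - (norm (Q u))\<^sup>2 = (Q v - Q u) \<bullet> (Q v + Q u)"
      by (simp add: power2_norm_eq_inner algebra_simps inner_commute)
    then have "norm ((norm (Q v))\<^sup>2 - (norm (Q u))\<^sup>2) \<le> norm (Q v - Q u) * norm (Q v + Q u)"
      using Cauchy_Schwarz_ineq2 by simp
    also have "\<dots> \<le> (K * (v - u) + K' * I u v) * (2 * B)"
    proof (rule mult_mono)
      show "norm (Q v + Q u) \<le> 2 * B"
        using B(2)[of u] B(2)[of v] uv norm_triangle_ineq[of "Q v" "Q u"] by auto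
    qed (use 1(3)[OF uv] 1(1,2) I0 uv in auto)
    finally show "norm ((norm (Q v))\<^sup>2 - (norm (Q u))\<^sup>2) \<le> 2 * B * K * (v - u) + 2 * B * K' * I u v"
      by (simp add: algebra_simps)
  qed (use 1 B in auto)
qed

lemma domd_lip:
  assumes "\<And>u v. a \<le> u \<Longrightarrow> u \<le> v \<Longrightarrow> v \<le> b \<Longrightarrow> norm (P v - P u) \<le> L * (v - u)"
  shows "domd a b I P"
proof (rule domdI[of "max L 0" "0::real"])
  fix u v assume uv: "a \<le> u" "u \<le> v" "v \<le> b"
  have "L * (v - u) \<le> max L 0 * (v - u)" using uv by (intro mult_right_mono) auto
  then show "norm (P v - P u) \<le> max L 0 * (v - u) + 0 * I u v" using assms[OF uv] by simp
qed (auto)?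

lemma bnd_cont:
  assumes "continuous_on {a..b} P"
  shows "bnd a b P"
proof -
  have "compact (P ` {a..b})" by (rule compact_continuous_image[OF assms compact_Icc])
  then obtain B where "B > 0" "\<forall>y\<in>P ` {a..b}. norm y \<le> B"
    using compact_imp_bounded bounded_pos by metis
  then show ?thesis unfolding bnd_def by (intro exI[of _ B]) auto
qed

lemma lip_deriv:
  fixes P :: "real \<Rightarrow> 'b::real_normed_vector"
  assumes der: "\<And>s. s \<in> {a..b} \<Longrightarrow> (P has_vector_derivative P' s) (at s within {a..b})"
    and B: "\<And>s. s \<in> {a..b} \<Longrightarrow> norm (P' s) \<le> B"
    and uv: "a \<le> u" "u \<le> v" "v \<le> b"
  shows "norm (P v - P u) \<le> B * (v - u)"
proof -
  have "norm (P v - P u) \<le> B * norm (v - u)"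
  proof (rule differentiable_bound[of "{a..b}" P "\<lambda>s h. h *\<^sub>R P' s" B])
    show "\<And>x. x \<in> {a..b} \<Longrightarrow> (P has_derivative (\<lambda>h. h *\<^sub>R P' x)) (at x within {a..b})"
      using der by (simp add: has_vector_derivative_def)
    show "onorm (\<lambda>h. h *\<^sub>R P' x) \<le> B" if "x \<in> {a..b}" for x
    proof (rule onorm_le)
      fix h :: real
      have "norm (h *\<^sub>R P' x) = norm (P' x) * norm h" by simp
      also have "\<dots> \<le> B * norm h" using B[OF that] by (intro mult_right_mono) auto
      finally show "norm (h *\<^sub>R P' x) \<le> B * norm h" .
    qed
  qed (use uv in auto)
  then show ?thesis using uv by simp
qed

lemma domd_C1:
  fixes P :: "real \<Rightarrow> 'b::real_normed_vector"
  assumes der: "\<And>s. s \<in> {a..b} \<Longrightarrow> (P has_vector_derivative P' s) (at s within {a..b})"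
    and c: "continuous_on {a..b} P'"
  shows "domd a b I P"
proof -
  obtain B where "B \<ge> 0" "\<And>s. s \<in> {a..b} \<Longrightarrow> norm (P' s) \<le> B" using bndE[OF bnd_cont[OF c]] by blast
  then show ?thesis by (intro domd_lip[of a b P B]) (rule lip_deriv[OF der], auto)
qed



lemma abs_deriv0:
  fixes h :: "real \<Rightarrow> real"
  assumes "(h has_real_derivative 0) (at t)" "h t = 0"
  shows "((\<lambda>s. \<bar>h s\<bar>) has_real_derivative 0) (at t)"
proof -
  have "((\<lambda>y. (h y - h t) / (y - t)) \<longlongrightarrow> 0) (at t)"
    using assms(1) by (simp add: has_field_derivative_iff)
  then have "((\<lambda>y. \<bar>(h y - h t) / (y - t)\<bar>) \<longlongrightarrow> 0) (at t)"
    by (simp only: tendsto_rabs_zero_iff)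
  moreover have eqf: "(\<lambda>y. \<bar>(h y - h t) / (y - t)\<bar>) = (\<lambda>y. \<bar>(\<bar>h y\<bar> - \<bar>h t\<bar>) / (y - t)\<bar>)"
    using assms(2) by (simp add: abs_divide)
  ultimately have "((\<lambda>y. \<bar>(\<bar>h y\<bar> - \<bar>h t\<bar>) / (y - t)\<bar>) \<longlongrightarrow> 0) (at t)" by (simp only: eqf)
  then have "((\<lambda>y. (\<bar>h y\<bar> - \<bar>h t\<bar>) / (y - t)) \<longlongrightarrow> 0) (at t)"
    by (simp only: tendsto_rabs_zero_iff)
  then show ?thesis by (simp add: has_field_derivative_iff)
qed

lemma min_deriv:
  fixes g :: "'i \<Rightarrow> real \<Rightarrow> real"
  assumes "finite A" "A \<noteq> {}" "\<And>i. i \<in> A \<Longrightarrow> (g i has_real_derivative D) (at t)"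
    "\<And>i. i \<in> A \<Longrightarrow> g i t = c"
  shows "((\<lambda>s. Min ((\<lambda>i. g i s) ` A)) has_real_derivative D) (at t)"
  using assms
proof (induction A rule: finite_ne_induct)
  case (singleton a)
  then show ?case by simp
next
  case (insert a A)
  let ?M = "\<lambda>s. Min ((\<lambda>i. g i s) ` A)"
  have M: "(?M has_real_derivative D) (at t)" using insert by auto
  have Mt: "?M t = c" using insert by (simp add: image_constant_conv)
  have ga: "(g a has_real_derivative D) (at t)" "g a t = c" using insert by auto
  have mm: "min u v = (u + v - \<bar>u - v\<bar>) / 2" for u v :: real by (auto simp: min_def)
  have eq: "Min ((\<lambda>i. g i s) ` insert a A) = (g a s + ?M s - \<bar>g a s - ?M s\<bar>) / 2" for s
    using insert by (simp add: mm[symmetric])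
  have d0: "((\<lambda>s. g a s - ?M s) has_real_derivative 0) (at t)"
    using DERIV_diff[OF ga(1) M] by simp
  have "((\<lambda>s. \<bar>g a s - ?M s\<bar>) has_real_derivative 0) (at t)"
    by (rule abs_deriv0[OF d0]) (simp add: ga Mt)
  then have "((\<lambda>s. (g a s + ?M s - \<bar>g a s - ?M s\<bar>) / 2) has_real_derivative (D + D - 0) / 2) (at t)"
    by (intro DERIV_cdivide DERIV_diff DERIV_add ga(1) M)
  moreover have "(\<lambda>s. Min ((\<lambda>i. g i s) ` insert a A)) = (\<lambda>s. (g a s + ?M s - \<bar>g a s - ?M s\<bar>) / 2)"
    by (intro ext eq)
  ultimately show ?case by simp
qed

lemma Min_bound:
  fixes a b :: "'i \<Rightarrow> real"
  assumes "finite I" "I \<noteq> {}" "\<And>i. i \<in> I \<Longrightarrow> \<bar>a i - b i\<bar> \<le> L"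
  shows "\<bar>Min (a ` I) - Min (b ` I)\<bar> \<le> L"
proof -
  have "Min (a ` I) \<in> a ` I" using assms by (intro Min_in) auto
  then obtain j where j: "j \<in> I" "Min (a ` I) = a j" by auto
  have "Min (b ` I) \<in> b ` I" using assms by (intro Min_in) auto
  then obtain k where k: "k \<in> I" "Min (b ` I) = b k" by auto
  have "Min (b ` I) \<le> b j" using j assms by auto
  moreover have "Min (a ` I) \<le> a k" using k assms by auto
  ultimately show ?thesis using assms(3)[OF j(1)] assms(3)[OF k(1)] j k by linarith
qed

lemma Min_cont:
  fixes g :: "'i \<Rightarrow> real \<Rightarrow> real"
  assumes "finite I" "I \<noteq> {}" "\<And>i. i \<in> I \<Longrightarrow> continuous_on S (g i)"
  shows "continuous_on S (\<lambda>s. Min ((\<lambda>i. g i s) ` I))"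
  using assms
proof (induction I rule: finite_ne_induct)
  case (singleton a) then show ?case by simp
next
  case (insert a A)
  have "continuous_on S (\<lambda>s. min (g a s) (Min ((\<lambda>i. g i s) ` A)))"
    using insert by (intro continuous_on_min) auto
  then show ?case using insert by simp
qed

lemma grad_ineq:
  fixes F :: "'a::real_inner \<Rightarrow> real"
  assumes cvx: "convex_on UNIV F" and der: "(F has_derivative (\<lambda>h. G \<bullet> h)) (at y)"
  shows "F y + G \<bullet> (z - y) \<le> F z"
proof -
  define d where "d = z - y"
  have l: "((\<lambda>\<theta>::real. y + \<theta> *\<^sub>R d) has_derivative (\<lambda>\<theta>. \<theta> *\<^sub>R d)) (at 0)"
    by (auto intro!: derivative_eq_intros)
  have "((\<lambda>\<theta>. F (y + \<theta> *\<^sub>R d)) has_derivative (\<lambda>\<theta>. G \<bullet> (\<theta> *\<^sub>R d))) (at 0)"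
    using has_derivative_compose[OF l, of F "\<lambda>h. G \<bullet> h"] der by (simp add: o_def)
  moreover have "(\<lambda>\<theta>. G \<bullet> (\<theta> *\<^sub>R d)) = (*) (G \<bullet> d)" by (auto simp: mult.commute)
  ultimately have "((\<lambda>\<theta>. F (y + \<theta> *\<^sub>R d)) has_real_derivative (G \<bullet> d)) (at 0)"
    by (simp add: has_field_derivative_def)
  then have "((\<lambda>\<theta>. (F (y + \<theta> *\<^sub>R d) - F y) / \<theta>) \<longlongrightarrow> G \<bullet> d) (at 0)"
    by (simp add: has_field_derivative_iff)
  then have lim: "((\<lambda>\<theta>. (F (y + \<theta> *\<^sub>R d) - F y) / \<theta>) \<longlongrightarrow> G \<bullet> d) (at_right 0)"
    by (rule tendsto_mono[OF at_le, rotated]) auto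
  have ev: "\<forall>\<^sub>F \<theta> in at_right 0. (F (y + \<theta> *\<^sub>R d) - F y) / \<theta> \<le> F z - F y"
  proof -
    have "\<forall>\<^sub>F \<theta> in at_right (0::real). \<theta> \<in> {0<..<1}"
      by (rule eventually_at_right_real) simp
    then show ?thesis
    proof (rule eventually_mono)
      fix \<theta> :: real assume th: "\<theta> \<in> {0<..<1}"
      have eqy: "y + \<theta> *\<^sub>R d = (1 - \<theta>) *\<^sub>R y + \<theta> *\<^sub>R z" by (simp add: d_def algebra_simps)
      have "F ((1 - \<theta>) *\<^sub>R y + \<theta> *\<^sub>R z) \<le> (1 - \<theta>) * F y + \<theta> * F z"
        using cvx th by (intro convex_onD) auto
      then have "F (y + \<theta> *\<^sub>R d) \<le> (1 - \<theta>) * F y + \<theta> * F z" by (simp only: eqy)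
      then have "F (y + \<theta> *\<^sub>R d) - F y \<le> \<theta> * (F z - F y)" by (simp add: algebra_simps)
      then show "(F (y + \<theta> *\<^sub>R d) - F y) / \<theta> \<le> F z - F y"
        using th by (simp add: divide_le_eq mult.commute)
    qed
  qed
  have "G \<bullet> d \<le> F z - F y"
    by (rule tendsto_le[OF _ tendsto_const lim ev]) simp
  then show ?thesis by (simp add: d_def)
qed

lemma norm2_deriv:
  fixes U :: "real \<Rightarrow> 'a::real_inner"
  assumes "(U has_vector_derivative U') (at t)"
  shows "((\<lambda>s. (norm (U s))\<^sup>2) has_real_derivative 2 * (U t \<bullet> U')) (at t)"
proof -
  have d: "(U has_derivative (\<lambda>h. h *\<^sub>R U')) (at t)" using assms by (simp add: has_vector_derivative_def)
  have "((\<lambda>s. U s \<bullet> U s) has_derivative (\<lambda>h. U t \<bullet> (h *\<^sub>R U') + (h *\<^sub>R U') \<bullet> U t)) (at t)"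
    by (rule has_derivative_inner[OF d d])
  moreover have "(\<lambda>h. U t \<bullet> (h *\<^sub>R U') + (h *\<^sub>R U') \<bullet> U t) = (*) (2 * (U t \<bullet> U'))"
    by (auto simp: inner_commute algebra_simps)
  ultimately show ?thesis by (simp add: has_field_derivative_def power2_norm_eq_inner)
qed

lemma isolated_countable:
  fixes Z :: "real set"
  assumes "\<And>t. t \<in> Z \<Longrightarrow> \<exists>\<delta>>0. \<forall>s\<in>Z. \<bar>s - t\<bar> < \<delta> \<longrightarrow> s = t"
  shows "countable Z"
proof -
  define \<delta> where "\<delta> t = (SOME \<delta>. \<delta> > 0 \<and> (\<forall>s\<in>Z. \<bar>s - t\<bar> < \<delta> \<longrightarrow> s = t))" for t
  have \<delta>: "\<delta> t > 0" "\<And>s. s \<in> Z \<Longrightarrow> \<bar>s - t\<bar> < \<delta> t \<Longrightarrow> s = t" if "t \<in> Z" for t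
    using someI_ex[OF assms[OF that]] unfolding \<delta>_def by auto
  define q where "q t = (SOME r. r \<in> \<rat> \<and> t - \<delta> t / 2 < r \<and> r < t)" for t
  have q: "q t \<in> \<rat>" "t - \<delta> t / 2 < q t" "q t < t" if "t \<in> Z" for t
  proof -
    have "t - \<delta> t / 2 < t" using \<delta>(1)[OF that] by simp
    then have "\<exists>r. r \<in> \<rat> \<and> t - \<delta> t / 2 < r \<and> r < t" using Rats_dense_in_real by blast
    from someI_ex[OF this] show "q t \<in> \<rat>" "t - \<delta> t / 2 < q t" "q t < t" unfolding q_def by auto
  qed
  have "inj_on q Z"
  proof (rule inj_onI)
    fix s t assume st: "s \<in> Z" "t \<in> Z" "q s = q t"
    show "s = t"
    proof (cases "\<delta> s \<ge> \<delta> t")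
      case True
      have "\<bar>t - s\<bar> < \<delta> s" using q[OF st(1)] q[OF st(2)] st(3) True \<delta>(1)[OF st(1)] by auto
      then show ?thesis using \<delta>(2)[OF st(1) st(2)] by simp
    next
      case False
      have "\<bar>s - t\<bar> < \<delta> t" using q[OF st(1)] q[OF st(2)] st(3) False \<delta>(1)[OF st(2)] by auto
      then show ?thesis using \<delta>(2)[OF st(2) st(1)] by simp
    qed
  qed
  moreover have "countable (q ` Z)"
    using q(1) by (intro countable_subset[OF _ countable_rat]) auto
  ultimately show ?thesis by (rule countable_image_inj_on[rotated])
qed



abbreviation hcontent :: "real set \<Rightarrow> real" where "hcontent \<equiv> Henstock_Kurzweil_Integration.content"

lemma mono_ae_aux:
  fixes H w :: "real \<Rightarrow> real" and N :: "real set"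
  assumes ab: "a \<le> b" and N: "negligible N"
    and wint: "w integrable_on {a..b}" and wpos: "\<And>s. s \<in> {a..b} \<Longrightarrow> 0 \<le> w s"
    and dom: "\<And>u v. a \<le> u \<Longrightarrow> u \<le> v \<Longrightarrow> v \<le> b \<Longrightarrow> H v - H u \<le> integral {u..v} w"
    and der: "\<And>s. s \<in> {a..b} - N \<Longrightarrow> \<exists>D\<le>0. (H has_real_derivative D) (at s within {a..b})"
    and e: "e > 0"
  shows "H b - H a \<le> e * (b - a) + 2 * e"
proof -
  let ?wN = "\<lambda>s. if s \<in> N then w s else 0"
  have "(?wN has_integral 0) (cbox a b)" by (rule has_integral_negligible_cbox[OF N]) auto
  then obtain g1 where g1: "gauge g1"
    "\<And>D. D tagged_division_of cbox a b \<Longrightarrow> g1 fine D \<Longrightarrow> norm ((\<Sum>(x,k)\<in>D. hcontent k *\<^sub>R ?wN x) - 0) < e"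
    using e unfolding has_integral by meson
  obtain g2 where g2: "gauge g2"
    "\<And>p. p tagged_partial_division_of cbox a b \<Longrightarrow> g2 fine p \<Longrightarrow> (\<Sum>(x,k)\<in>p. norm (hcontent k *\<^sub>R w x - integral k w)) < e"
    using Henstock_lemma[of w a b e] wint e by (auto simp: box_real)
  define P where "P s d \<longleftrightarrow> d > 0 \<and> (\<forall>y\<in>{a..b}. s \<le> y \<and> y - s < d \<longrightarrow> H y - H s \<le> e*(y-s))
       \<and> (\<forall>y\<in>{a..b}. y \<le> s \<and> s - y < d \<longrightarrow> H s - H y \<le> e*(s-y))" for s d
  have exP: "\<exists>d. P s d" if s: "s \<in> {a..b} - N" for s
  proof -
    obtain D where D: "D \<le> 0" "(H has_real_derivative D) (at s within {a..b})" using der[OF s] by blast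
    then have "((H has_derivative (\<lambda>h. D * h)) (at s within {a..b}))"
      by (simp add: has_field_derivative_def)
    then obtain d where d: "d > 0" "\<forall>y\<in>{a..b}. norm (y - s) < d \<longrightarrow> norm (H y - H s - D * (y - s)) \<le> e * norm (y - s)"
      using e unfolding has_derivative_within_alt by meson
    have "P s d" unfolding P_def
    proof (intro conjI ballI impI)
      fix y assume y: "y \<in> {a..b}" "s \<le> y \<and> y - s < d"
      have "\<bar>y - s\<bar> < d" using y by auto
      then have "\<bar>H y - H s - D * (y - s)\<bar> \<le> e * \<bar>y - s\<bar>" using d(2) y(1) by (metis real_norm_def)
      moreover have "D * (y - s) \<le> 0" using y D by (simp add: mult_nonpos_nonneg)
      ultimately show "H y - H s \<le> e * (y - s)" using y by auto
    next
      fix y assume y: "y \<in> {a..b}" "y \<le> s \<and> s - y < d"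
      have "\<bar>y - s\<bar> < d" using y by auto
      then have "\<bar>H y - H s - D * (y - s)\<bar> \<le> e * \<bar>y - s\<bar>" using d(2) y(1) by (metis real_norm_def)
      moreover have "D * (y - s) \<ge> 0" using y D by (simp add: mult_nonpos_nonpos)
      ultimately show "H s - H y \<le> e * (s - y)" using y by auto
    qed (use d in auto)
    then show ?thesis by blast
  qed
  define d where "d s = (if s \<in> {a..b} - N then (SOME d. P s d) else 1)" for s
  have dP: "P s (d s)" if "s \<in> {a..b} - N" for s
    using someI_ex[OF exP[OF that]] that by (simp add: d_def)
  have dpos: "\<forall>s. 0 < d s"
  proof
    fix s show "0 < d s"
      using dP[of s] unfolding P_def by (cases "s \<in> {a..b} - N") (auto simp: d_def)
  qed
  define \<gamma> where "\<gamma> s = ball s (d s) \<inter> g1 s \<inter> g2 s" for s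
  have "gauge \<gamma>" unfolding \<gamma>_def
    by (intro gauge_Int gauge_ball_dependent dpos g1 g2)
  then obtain p where p: "p tagged_division_of {a..b}" "\<gamma> fine p"
    using fine_division_exists_real by blast
  have finp: "finite p" using p(1) by (rule tagged_division_of_finite)
  have g1p: "g1 fine p" and g2p: "g2 fine p" using p(2) by (auto simp: fine_def \<gamma>_def)
  let ?F = "\<lambda>(x,K). (if x \<in> N then hcontent K * w x + \<bar>hcontent K * w x - integral K w\<bar> else e * hcontent K)"
  have trm: "H (Sup K) - H (Inf K) \<le> ?F (x,K)" if xK: "(x,K) \<in> p" for x K
  proof -
    obtain u v where K: "K = cbox u v" "x \<in> K" "K \<subseteq> {a..b}" "K \<subseteq> \<gamma> x"
      using tagged_division_ofD(2-4)[OF p(1) xK] p(2) xK by (force simp: fine_def)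
    have uv: "u \<le> x" "x \<le> v" "a \<le> u" "v \<le> b" using K by auto
    have SI: "Sup K = v" "Inf K = u" using K uv by auto
    show ?thesis
    proof (cases "x \<in> N")
      case True
      have "H v - H u \<le> integral K w" using dom[of u v] uv K by auto
      also have "\<dots> \<le> hcontent K * w x + \<bar>hcontent K * w x - integral K w\<bar>" by linarith
      finally show ?thesis using True SI by simp
    next
      case False
      have x: "x \<in> {a..b} - N" using uv False by auto
      have inb: "u \<in> ball x (d x)" "v \<in> ball x (d x)" 
      proof -
        have "K \<subseteq> ball x (d x)" using K by (auto simp: \<gamma>_def)
        moreover have "u \<in> K" "v \<in> K" using K uv by auto
        ultimately show "u \<in> ball x (d x)" "v \<in> ball x (d x)" by auto
      qed
      have "H v - H x \<le> e*(v-x)" using dP[OF x] inb uv by (auto simp: P_def dist_real_def)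
      moreover have "H x - H u \<le> e*(x-u)" using dP[OF x] inb uv by (auto simp: P_def dist_real_def)
      moreover have "hcontent K = v - u" using K uv by simp
      moreover have "e*(v-x) + e*(x-u) = e*(v-u)" by (simp add: algebra_simps)
      ultimately show ?thesis using False SI by simp
    qed
  qed
  have "H b - H a = (\<Sum>(x,K)\<in>p. H (Sup K) - H (Inf K))"
    using additive_tagged_division_1[OF ab p(1), of H] by simp
  also have "\<dots> \<le> (\<Sum>(x,K)\<in>p. ?F (x,K))"
    by (rule sum_mono) (use trm in auto)
  also have "\<dots> = (\<Sum>(x,K)\<in>p. hcontent K *\<^sub>R ?wN x)
      + (\<Sum>(x,K)\<in>p. if x \<in> N then \<bar>hcontent K * w x - integral K w\<bar> else 0)
      + e * (\<Sum>(x,K)\<in>p. if x \<in> N then 0 else hcontent K)"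
    by (simp add: sum.distrib[symmetric] sum_distrib_left split_def if_distrib cong: if_cong)
  also have "\<dots> \<le> e + e + e * (b - a)"
  proof -
    have 1: "(\<Sum>(x,K)\<in>p. hcontent K *\<^sub>R ?wN x) \<le> e"
      using g1(2)[OF p(1)[folded box_real(2)] g1p] by simp
    let ?p1 = "{t \<in> p. fst t \<in> N}"
    have "(\<Sum>(x,K)\<in>p. if x \<in> N then \<bar>hcontent K * w x - integral K w\<bar> else 0)
        = (\<Sum>(x,K)\<in>?p1. norm (hcontent K *\<^sub>R w x - integral K w))"
      by (subst sum.inter_filter[OF finp]) (auto simp: split_def intro!: sum.cong)
    also have "\<dots> < e"
    proof (rule g2(2))
      show "?p1 tagged_partial_division_of cbox a b"
        using p(1) by (auto simp: box_real tagged_division_of_def intro: tagged_partial_division_subset)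
      show "g2 fine ?p1" using g2p by (rule fine_subset[rotated]) auto
    qed
    finally have 2: "(\<Sum>(x,K)\<in>p. if x \<in> N then \<bar>hcontent K * w x - integral K w\<bar> else 0) \<le> e" by simp
    have "(\<Sum>(x,K)\<in>p. if x \<in> N then 0 else hcontent K) \<le> (\<Sum>(x,K)\<in>p. hcontent K)"
      by (rule sum_mono) (auto split: prod.splits)
    also have "\<dots> = b - a" using additive_content_tagged_division[OF p(1)[folded box_real(2)]] ab by simp
    finally have 3: "e * (\<Sum>(x,K)\<in>p. if x \<in> N then 0 else hcontent K) \<le> e * (b - a)"
      using e by (simp add: mult_left_mono)
    show ?thesis using 1 2 3 by linarith
  qed
  finally show ?thesis by linarith
qed

lemma mono_ae:
  fixes H w :: "real \<Rightarrow> real" and N :: "real set"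
  assumes ab: "a \<le> b" and N: "negligible N"
    and wint: "w integrable_on {a..b}" and wpos: "\<And>s. s \<in> {a..b} \<Longrightarrow> 0 \<le> w s"
    and dom: "\<And>u v. a \<le> u \<Longrightarrow> u \<le> v \<Longrightarrow> v \<le> b \<Longrightarrow> H v - H u \<le> integral {u..v} w"
    and der: "\<And>s. s \<in> {a..b} - N \<Longrightarrow> \<exists>D\<le>0. (H has_real_derivative D) (at s within {a..b})"
  shows "H b \<le> H a"
proof -
  have "H b - H a \<le> 0 + e" if e: "e > 0" for e
  proof -
    have "b - a + 2 > 0" using ab by simp
    then have e': "e / (b - a + 2) > 0" using e by simp
    have "H b - H a \<le> (e / (b - a + 2)) * (b - a) + 2 * (e / (b - a + 2))"
      by (rule mono_ae_aux[OF ab N wint wpos dom der e'])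
    also have "\<dots> = (e / (b - a + 2)) * (b - a + 2)" by (metis distrib_left mult.commute)
    also have "\<dots> = e" using \<open>b - a + 2 > 0\<close> by simp
    finally show ?thesis by simp
  qed
  then have "H b - H a \<le> 0" by (rule field_le_epsilon)
  then show ?thesis by simp
qed



lemma chain_f:
  fixes F :: "'a::real_inner \<Rightarrow> real"
  assumes "(F has_derivative (\<lambda>h. G \<bullet> h)) (at (X t))" "(X has_vector_derivative V) (at t within S)"
  shows "((\<lambda>s. F (X s)) has_real_derivative (G \<bullet> V)) (at t within S)"
proof -
  have "(X has_derivative (\<lambda>h. h *\<^sub>R V)) (at t within S)" using assms(2) by (simp add: has_vector_derivative_def)
  from diff_chain_within[OF this has_derivative_at_withinI[OF assms(1)]]
  have "((\<lambda>s. F (X s)) has_derivative (\<lambda>h. G \<bullet> (h *\<^sub>R V))) (at t within S)" by (simp add: o_def)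
  moreover have "(\<lambda>h. G \<bullet> (h *\<^sub>R V)) = (*) (G \<bullet> V)" by (auto simp: mult.commute)
  ultimately show ?thesis by (simp add: has_field_derivative_def)
qed

theorem lemma4p13:
  fixes f :: "nat \<Rightarrow> 'a::{real_inner,complete_space} \<Rightarrow> real"
    and df :: "nat \<Rightarrow> 'a \<Rightarrow> 'a"
    and m :: nat and \<alpha> t0 lam \<xi> :: real and x0 v0 z :: 'a
    and x xd xdd :: "real \<Rightarrow> 'a"
  assumes m: "0 < m"
    and convex: "\<And>i. i < m \<Longrightarrow> convex_on UNIV (f i)"
    and grad: "\<And>i y. i < m \<Longrightarrow> (f i has_derivative (\<lambda>h. df i y \<bullet> h)) (at y)"
    and grad_cont: "\<And>i. i < m \<Longrightarrow> continuous_on UNIV (df i)"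
    and \<alpha>: "\<alpha> > 0" and t0: "t0 > 0"
    and sol: "is_solution \<alpha> m df t0 x0 v0 x xd xdd"
    and lam: "lam \<ge> 0" and \<xi>: "\<xi> = lam * (\<alpha> - 1 - lam)" and \<xi>_nonneg: "\<xi> \<ge> 0"
  shows "(AE t in lborel. t \<ge> t0 \<longrightarrow> energy m f x xd z lam \<xi> differentiable (at t))
    \<and> (AE t in lborel. t \<ge> t0 \<longrightarrow>
          deriv (energy m f x xd z lam \<xi>) t
            \<le> (2 - lam) * t * Min ((\<lambda>i. f i (x t) - f i z) ` {..<m})
               - (\<alpha> - lam - 1) * t * (norm (xd t))\<^sup>2)
    \<and> (\<forall>t\<ge>t0. energy m f x xd z lam \<xi> t - energy m f x xd z lam \<xi> t0
          \<le> (2 - lam) * integral {t0..t} (\<lambda>s. s * Min ((\<lambda>i. f i (x s) - f i z) ` {..<m}))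
             + integral {t0..t} (\<lambda>s. s * (lam + 1 - \<alpha>) * (norm (xd s))\<^sup>2))"
proof -
  note sol' = sol[unfolded is_solution_def]
  have xder: "\<And>t. t0 \<le> t \<Longrightarrow> (x has_vector_derivative xd t) (at t within {t0..})" using sol' by blast
  have xdcont: "continuous_on {t0..} xd" using sol' by blast
  have nxddint: "\<And>t. t0 \<le> t \<Longrightarrow> (\<lambda>s. norm (xdd s)) integrable_on {t0..t}" using sol' by blast
  have xddint: "\<And>t. t0 \<le> t \<Longrightarrow> (xdd has_integral (xd t - xd t0)) {t0..t}" using sol' by blast
  have xdd_ae: "AE t in lborel. t \<ge> t0 \<longrightarrow> (xd has_vector_derivative xdd t) (at t)" using sol' by blast
  have dyn_ae: "AE t in lborel. t > t0 \<longrightarrow>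
        (\<alpha> / t) *\<^sub>R xd t + proj ((\<lambda>c. c + xdd t) ` Cgrad m df (x t)) 0 = 0" using sol' by blast
  define g where "g i s = f i (x s) - f i z" for i s
  define g' where "g' i s = df i (x s) \<bullet> xd s" for i s
  define \<phi> where "\<phi> s = Min ((\<lambda>i. g i s) ` {..<m})" for s
  define U where "U s = lam *\<^sub>R (x s - z) + s *\<^sub>R xd s" for s
  define E where "E = energy m f x xd z lam \<xi>"
  have E_eq: "E s = s\<^sup>2 * \<phi> s + 1/2 * (norm (U s))\<^sup>2 + \<xi>/2 * (norm (x s - z))\<^sup>2" for s
    by (simp add: E_def energy_def \<phi>_def g_def U_def)
  have xat: "(x has_vector_derivative xd t) (at t)" if t: "t0 < t" for t
  proof -
    have "(x has_vector_derivative xd t) (at t within {t0<..})"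
      by (rule has_vector_derivative_within_subset[OF xder]) (use t in auto)
    then show ?thesis using t by (subst (asm) has_vector_derivative_within_open) auto
  qed
  have xcont: "continuous_on {t0..} x"
    using xder by (auto simp: continuous_on_eq_continuous_within intro: has_vector_derivative_continuous)
  have gder: "(g i has_real_derivative g' i s) (at s within {t0..})" if "i < m" "t0 \<le> s" for i s
    unfolding g_def g'_def using chain_f[OF grad[OF that(1)] xder[OF that(2)]] by (auto intro!: derivative_eq_intros)
  have gat: "(g i has_real_derivative g' i s) (at s)" if "i < m" "t0 < s" for i s
    unfolding g_def g'_def using chain_f[OF grad[OF that(1)] xat[OF that(2)]] by (auto intro!: derivative_eq_intros)
  have g'cont: "continuous_on {t0..} (g' i)" if "i < m" for i
    unfolding g'_def
    by (intro continuous_on_inner continuous_on_compose2[OF grad_cont[OF that] xcont] xdcont) auto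
  have gcont: "continuous_on {t0..} (g i)" if "i < m" for i
    using gder[OF that] by (auto intro!: DERIV_continuous_on)
  have \<phi>cont: "continuous_on {t0..} \<phi>"
    unfolding \<phi>_def by (rule Min_cont) (use m gcont in auto)
  define Z where "Z i j = {s. t0 < s \<and> g i s = g j s \<and> g' i s \<noteq> g' j s}" for i j
  define N\<phi> where "N\<phi> = (\<Union>i<m. \<Union>j<m. Z i j)"
  have cN\<phi>: "countable N\<phi>"
    unfolding N\<phi>_def
  proof (intro countable_UN countable_finite[OF finite_lessThan])
    fix i j assume ij: "i \<in> {..<m}" "j \<in> {..<m}"
    show "countable (Z i j)"
    proof (rule isolated_countable)
      fix t assume t: "t \<in> Z i j"
      let ?h = "\<lambda>s. g i s - g j s"
      have "(?h has_real_derivative (g' i t - g' j t)) (at t)"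
        using t ij by (intro DERIV_diff gat) (auto simp: Z_def)
      then have "((\<lambda>y. (?h y - ?h t) / (y - t)) \<longlongrightarrow> g' i t - g' j t) (at t)"
        by (simp add: has_field_derivative_iff)
      then have "\<forall>\<^sub>F y in at t. (?h y - ?h t) / (y - t) \<noteq> 0"
        by (rule tendsto_imp_eventually_ne) (use t in \<open>simp add: Z_def\<close>)
      then obtain \<delta> where \<delta>: "\<delta> > 0" "\<And>y. y \<noteq> t \<Longrightarrow> dist y t < \<delta> \<Longrightarrow> (?h y - ?h t) / (y - t) \<noteq> 0"
        unfolding eventually_at by auto
      show "\<exists>\<delta>>0. \<forall>s\<in>Z i j. \<bar>s - t\<bar> < \<delta> \<longrightarrow> s = t"
      proof (intro exI[of _ \<delta>] conjI ballI impI)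
        fix s assume s: "s \<in> Z i j" "\<bar>s - t\<bar> < \<delta>"
        show "s = t"
        proof (rule ccontr)
          assume "s \<noteq> t"
          then have "(?h s - ?h t) / (s - t) \<noteq> 0" using \<delta>(2)[of s] s(2) by (auto simp: dist_real_def)
          moreover have "?h s = 0" "?h t = 0" using s(1) t by (auto simp: Z_def)
          ultimately show False by simp
        qed
      qed (rule \<delta>(1))
    qed
  qed
  have \<phi>der: "\<exists>k<m. g k s = \<phi> s \<and> (\<phi> has_real_derivative g' k s) (at s)" if s: "t0 < s" "s \<notin> N\<phi>" for s
  proof -
    define A where "A = {i. i < m \<and> g i s = \<phi> s}"
    have "\<phi> s \<in> (\<lambda>i. g i s) ` {..<m}" unfolding \<phi>_def using m by (intro Min_in) auto
    then obtain k where k: "k < m" "g k s = \<phi> s" by auto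
    have kA: "k \<in> A" using k by (simp add: A_def)
    have finA: "finite A" and neA: "A \<noteq> {}" using kA by (auto simp: A_def)
    have Ad: "g' i s = g' k s" if "i \<in> A" for i
    proof (rule ccontr)
      assume "g' i s \<noteq> g' k s"
      then have "s \<in> Z i k" using that k s by (auto simp: Z_def A_def)
      then have "s \<in> N\<phi>" using that k by (auto simp: N\<phi>_def A_def)
      then show False using s by simp
    qed
    have Mder: "((\<lambda>r. Min ((\<lambda>i. g i r) ` A)) has_real_derivative g' k s) (at s)"
    proof (rule min_deriv[OF finA neA, where c = "\<phi> s"])
      fix i assume i: "i \<in> A"
      then have "(g i has_real_derivative g' i s) (at s)" using gat s by (auto simp: A_def)
      then show "(g i has_real_derivative g' k s) (at s)" using Ad[OF i] by simp
      show "g i s = \<phi> s" using i by (simp add: A_def)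
    qed
    define B where "B = {..<m} - A"
    have evB: "\<forall>\<^sub>F r in nhds s. \<forall>i\<in>B. g k r < g i r"
    proof (rule eventually_ball_finite)
      show "finite B" by (simp add: B_def)
      show "\<forall>i\<in>B. \<forall>\<^sub>F r in nhds s. g k r < g i r"
      proof
        fix i assume i: "i \<in> B"
        have "\<phi> s \<le> g i s" unfolding \<phi>_def using i by (auto simp: B_def)
        then have gt: "g k s < g i s" using i k by (auto simp: B_def A_def)
        have "isCont (\<lambda>r. g i r - g k r) s"
          using gat[of i s] gat[of k s] i k s
          by (intro continuous_intros DERIV_isCont) (auto simp: B_def)
        then have "((\<lambda>r. g i r - g k r) \<longlongrightarrow> g i s - g k s) (at s)" by (simp add: isCont_def)
        then have "\<forall>\<^sub>F r in at s. 0 < g i r - g k r" using gt by (intro order_tendstoD(1)) auto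
        then show "\<forall>\<^sub>F r in nhds s. g k r < g i r"
          unfolding eventually_nhds_conv_at using gt by (auto elim: eventually_mono)
      qed
    qed
    have "\<forall>\<^sub>F r in nhds s. \<phi> r = Min ((\<lambda>i. g i r) ` A)"
      using evB
    proof (rule eventually_mono)
      fix r assume r: "\<forall>i\<in>B. g k r < g i r"
      have "\<phi> r \<le> Min ((\<lambda>i. g i r) ` A)" unfolding \<phi>_def
        by (rule Min_antimono) (use neA in \<open>auto simp: A_def\<close>)
      moreover have "Min ((\<lambda>i. g i r) ` A) \<le> \<phi> r"
      proof -
        have "\<phi> r \<in> (\<lambda>i. g i r) ` {..<m}" unfolding \<phi>_def using m by (intro Min_in) auto
        then obtain j where j: "j < m" "\<phi> r = g j r" by auto
        show ?thesis
        proof (cases "j \<in> A")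
          case True then show ?thesis using j finA by auto
        next
          case False
          then have "g k r < g j r" using r j by (auto simp: B_def)
          moreover have "Min ((\<lambda>i. g i r) ` A) \<le> g k r" using kA finA by auto
          ultimately show ?thesis using j by auto
        qed
      qed
      ultimately show "\<phi> r = Min ((\<lambda>i. g i r) ` A)" by simp
    qed
    from DERIV_cong_ev[OF refl this refl, THEN iffD2, OF Mder]
    have "(\<phi> has_real_derivative g' k s) (at s)" .
    then show ?thesis using k by blast
  qed
  have Cprops: "\<exists>c0\<in>Cgrad m df (x s). xdd s = - (\<alpha> / s) *\<^sub>R xd s - c0 \<and>
        (\<forall>c\<in>Cgrad m df (x s). xd s \<bullet> (c - c0) \<le> 0)"
    if s: "t0 < s" and dyn: "(\<alpha> / s) *\<^sub>R xd s + proj ((\<lambda>c. c + xdd s) ` Cgrad m df (x s)) 0 = 0" for s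
  proof -
    define C where "C = Cgrad m df (x s)"
    define K where "K = (\<lambda>c. c + xdd s) ` C"
    have compC: "compact C" unfolding C_def Cgrad_def by (intro finite_imp_compact_convex_hull) auto
    have convC: "convex C" unfolding C_def Cgrad_def by simp
    have neC: "C \<noteq> {}" unfolding C_def Cgrad_def using m by auto
    have Keq: "K = (+) (xdd s) ` C" unfolding K_def by (auto simp: add.commute)
    have compK: "compact K" unfolding Keq by (intro compact_continuous_image compC continuous_intros)
    have convK: "convex K" unfolding Keq by (rule convex_translation[OF convC])
    have neK: "K \<noteq> {}" using neC by (simp add: K_def)
    have "\<exists>w\<in>K. \<forall>u\<in>K. (norm (w - 0))\<^sup>2 \<le> (norm (u - 0))\<^sup>2"
      by (rule continuous_attains_inf[OF compK neK]) (intro continuous_intros)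
    then have "\<exists>w. w \<in> K \<and> (\<forall>u\<in>K. (norm (w - 0))\<^sup>2 \<le> (norm (u - 0))\<^sup>2)" by blast
    from someI_ex[OF this] have p: "proj K 0 \<in> K" "\<forall>u\<in>K. (norm (proj K 0 - 0))\<^sup>2 \<le> (norm (u - 0))\<^sup>2"
      unfolding proj_def by blast+
    define p where "p = proj K 0"
    have pv: "p = - (\<alpha> / s) *\<^sub>R xd s" using dyn unfolding p_def K_def C_def
      by (simp add: eq_neg_iff_add_eq_0 add.commute)
    obtain c0 where c0: "c0 \<in> C" "p = c0 + xdd s" using p(1) unfolding p_def K_def by auto
    have var: "xd s \<bullet> (c - c0) \<le> 0" if c: "c \<in> C" for c
    proof -
      have cK: "c + xdd s \<in> K" using c by (simp add: K_def)
      have "\<forall>z\<in>K. dist 0 p \<le> dist 0 z"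
      proof
        fix z assume "z \<in> K"
        then have "(norm (proj K 0 - 0))\<^sup>2 \<le> (norm (z - 0))\<^sup>2" using p(2) by blast
        then have "(norm p)\<^sup>2 \<le> (norm z)\<^sup>2" unfolding p_def by simp
        then have "norm p \<le> norm z" by (rule power2_le_imp_le) simp
        then show "dist 0 p \<le> dist 0 z" by (simp add: dist_norm)
      qed
      from any_closest_point_dot[OF convK compact_imp_closed[OF compK] p(1)[folded p_def] cK this]
      have F: "(0 - p) \<bullet> (c + xdd s - p) \<le> 0" .
      have eq1: "c + xdd s - p = c - c0" using c0(2) by simp
      have eq2: "0 - p = (\<alpha> / s) *\<^sub>R xd s" using pv by simp
      from F have "((\<alpha> / s) *\<^sub>R xd s) \<bullet> (c - c0) \<le> 0" by (simp only: eq1 eq2)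
      then have "(\<alpha> / s) * (xd s \<bullet> (c - c0)) \<le> 0" by simp
      moreover have "\<alpha> / s > 0" using \<alpha> s t0 by simp
      ultimately show ?thesis by (metis mult_zero_right mult_le_cancel_left_pos)
    qed
    have "xdd s = - (\<alpha> / s) *\<^sub>R xd s - c0" using pv c0(2) by (simp add: algebra_simps)
    then show ?thesis using c0(1) var unfolding C_def by blast
  qed
  have hullb: "\<phi> s \<le> (x s - z) \<bullet> c" if c: "c \<in> Cgrad m df (x s)" for s c
  proof -
    have "(\<lambda>i. df i (x s)) ` {..<m} \<subseteq> {v. \<phi> s \<le> (x s - z) \<bullet> v}"
    proof clarify
      fix i assume i: "i < m"
      have "f i (x s) + df i (x s) \<bullet> (z - x s) \<le> f i z" by (rule grad_ineq[OF convex[OF i] grad[OF i]])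
      moreover have "\<phi> s \<le> g i s" unfolding \<phi>_def using i by auto
      ultimately show "\<phi> s \<le> (x s - z) \<bullet> df i (x s)"
        unfolding g_def by (simp add: inner_diff_left inner_diff_right inner_commute)
    qed
    then have "Cgrad m df (x s) \<subseteq> {v. \<phi> s \<le> (x s - z) \<bullet> v}"
      unfolding Cgrad_def by (intro hull_minimal convex_halfspace_ge)
    then show ?thesis using c by auto
  qed
  have good: "\<exists>Ed. (E has_real_derivative Ed) (at s) \<and>
      Ed \<le> (2 - lam) * s * \<phi> s - (\<alpha> - lam - 1) * s * (norm (xd s))\<^sup>2"
    if s: "t0 < s" "s \<notin> N\<phi>" and xdds: "(xd has_vector_derivative xdd s) (at s)"
      and dyn: "(\<alpha> / s) *\<^sub>R xd s + proj ((\<lambda>c. c + xdd s) ` Cgrad m df (x s)) 0 = 0" for s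
  proof -
    obtain k where k: "k < m" "g k s = \<phi> s" and \<phi>d: "(\<phi> has_real_derivative g' k s) (at s)"
      using \<phi>der[OF s] by blast
    obtain c0 where c0: "c0 \<in> Cgrad m df (x s)" "xdd s = - (\<alpha> / s) *\<^sub>R xd s - c0"
      and var: "\<forall>c\<in>Cgrad m df (x s). xd s \<bullet> (c - c0) \<le> 0"
      using Cprops[OF s(1) dyn] by blast
    define U' where "U' = lam *\<^sub>R xd s + (s *\<^sub>R xdd s + 1 *\<^sub>R xd s)"
    have Xd: "((\<lambda>r. x r - z) has_vector_derivative xd s) (at s)"
      using xat[OF s(1)] by (intro derivative_eq_intros) auto
    have L: "((\<lambda>r. lam *\<^sub>R (x r - z)) has_vector_derivative lam *\<^sub>R xd s) (at s)"
      using has_vector_derivative_scaleR[OF DERIV_const[of lam] Xd] by simp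
    have R: "((\<lambda>r. r *\<^sub>R xd r) has_vector_derivative (s *\<^sub>R xdd s + 1 *\<^sub>R xd s)) (at s)"
      using has_vector_derivative_scaleR[OF DERIV_ident xdds] by simp
    have Ud: "(U has_vector_derivative U') (at s)" unfolding U_def U'_def
      by (rule has_vector_derivative_add[OF L R])
    define Ed where "Ed = (2 * s * \<phi> s + s\<^sup>2 * g' k s) + 1/2 * (2 * (U s \<bullet> U')) + \<xi>/2 * (2 * ((x s - z) \<bullet> xd s))"
    have "((\<lambda>r. r\<^sup>2 * \<phi> r + 1/2 * (norm (U r))\<^sup>2 + \<xi>/2 * (norm (x r - z))\<^sup>2) has_real_derivative Ed) (at s)"
    proof -
      have "((\<lambda>r. r\<^sup>2) has_real_derivative 2 * s) (at s)"
        by (auto intro!: derivative_eq_intros)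
      from DERIV_mult'[OF this \<phi>d]
      have 1: "((\<lambda>r. r\<^sup>2 * \<phi> r) has_real_derivative 2 * s * \<phi> s + s\<^sup>2 * g' k s) (at s)"
        by (simp add: algebra_simps)
      have 2: "((\<lambda>r. 1/2 * (norm (U r))\<^sup>2) has_real_derivative 1/2 * (2 * (U s \<bullet> U'))) (at s)"
        by (intro DERIV_cmult norm2_deriv Ud)
      have 3: "((\<lambda>r. \<xi>/2 * (norm (x r - z))\<^sup>2) has_real_derivative \<xi>/2 * (2 * ((x s - z) \<bullet> xd s))) (at s)"
        by (intro DERIV_cmult norm2_deriv Xd)
      show ?thesis unfolding Ed_def by (intro DERIV_add 1 2 3)
    qed
    moreover have "E = (\<lambda>r. r\<^sup>2 * \<phi> r + 1/2 * (norm (U r))\<^sup>2 + \<xi>/2 * (norm (x r - z))\<^sup>2)"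
      using E_eq by auto
    ultimately have Ed: "(E has_real_derivative Ed) (at s)" by simp
    define V where "V = xd s"
    define X where "X = x s - z"
    have U'eq: "U' = (lam + 1 - \<alpha>) *\<^sub>R V - s *\<^sub>R c0"
    proof -
      have sa: "s * (\<alpha> / s) = \<alpha>" using s(1) t0 by simp
      have "s *\<^sub>R xdd s = s *\<^sub>R (- (\<alpha> / s) *\<^sub>R xd s - c0)" using c0(2) by simp
      also have "\<dots> = - (s * (\<alpha> / s)) *\<^sub>R xd s - s *\<^sub>R c0" by (simp add: scaleR_right_diff_distrib)
      also have "\<dots> = - \<alpha> *\<^sub>R V - s *\<^sub>R c0" by (simp only: sa V_def)
      finally have sx: "s *\<^sub>R xdd s = - \<alpha> *\<^sub>R V - s *\<^sub>R c0" .
      show ?thesis unfolding U'_def sx by (simp add: V_def algebra_simps)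
    qed
    have UU: "U s \<bullet> U' = lam * (lam + 1 - \<alpha>) * (X \<bullet> V) - lam * s * (X \<bullet> c0)
        + s * (lam + 1 - \<alpha>) * (V \<bullet> V) - s * s * (V \<bullet> c0)"
      unfolding U'eq U_def X_def[symmetric] V_def[symmetric]
      by (simp add: inner_add_left inner_add_right inner_diff_left inner_diff_right inner_commute algebra_simps)
    have e1: "g' k s \<le> V \<bullet> c0"
    proof -
      have "df k (x s) \<in> Cgrad m df (x s)" unfolding Cgrad_def using k(1) by (intro hull_inc) auto
      then have "xd s \<bullet> (df k (x s) - c0) \<le> 0" using var by blast
      then show ?thesis by (simp add: g'_def V_def inner_diff_right inner_commute)
    qed
    have e2: "\<phi> s \<le> X \<bullet> c0" unfolding X_def by (rule hullb[OF c0(1)])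
    have s2: "s * s * g' k s \<le> s * s * (V \<bullet> c0)" using e1 by (intro mult_left_mono) auto
    have l2: "lam * s * \<phi> s \<le> lam * s * (X \<bullet> c0)" using e2 lam s(1) t0 by (intro mult_left_mono) auto
    have "Ed = 2 * s * \<phi> s + s * s * g' k s - s * s * (V \<bullet> c0) - lam * s * (X \<bullet> c0)
        + s * (lam + 1 - \<alpha>) * (V \<bullet> V)"
      unfolding Ed_def UU \<xi> X_def[symmetric] V_def[symmetric]
      by (simp add: field_simps power2_eq_square)
    also have "\<dots> \<le> 2 * s * \<phi> s - lam * s * \<phi> s + s * (lam + 1 - \<alpha>) * (V \<bullet> V)"
      using s2 l2 by linarith
    also have "\<dots> = (2 - lam) * s * \<phi> s - (\<alpha> - lam - 1) * s * (norm (xd s))\<^sup>2"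
      by (simp add: V_def power2_norm_eq_inner algebra_simps)
    finally show ?thesis using Ed by blast
  qed
  have \<phi>_eq: "Min ((\<lambda>i. f i (x t) - f i z) ` {..<m}) = \<phi> t" for t by (simp add: \<phi>_def g_def)
  define good where "good s \<longleftrightarrow> t0 < s \<and> s \<notin> N\<phi> \<and> (xd has_vector_derivative xdd s) (at s) \<and>
      (\<alpha> / s) *\<^sub>R xd s + proj ((\<lambda>c. c + xdd s) ` Cgrad m df (x s)) 0 = 0" for s
  have AEgood: "AE s in lborel. t0 \<le> s \<longrightarrow> good s"
  proof -
    have "countable (insert t0 N\<phi>)" using cN\<phi> by simp
    then have "AE s in lborel. s \<notin> insert t0 N\<phi>"
      by (intro AE_not_in countable_imp_null_set_lborel)
    then show ?thesis using xdd_ae dyn_ae by eventually_elim (auto simp: good_def)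
  qed
  have goodE: "\<exists>Ed. (E has_real_derivative Ed) (at s) \<and>
      Ed \<le> (2 - lam) * s * \<phi> s - (\<alpha> - lam - 1) * s * (norm (xd s))\<^sup>2" if "good s" for s
    using that unfolding good_def by (intro good) auto
  have part1: "AE t in lborel. t0 \<le> t \<longrightarrow> E differentiable (at t)"
    using AEgood
  proof eventually_elim
    case (elim t)
    show ?case
    proof
      assume "t0 \<le> t"
      then obtain Ed where "(E has_real_derivative Ed) (at t)" using goodE elim by blast
      then show "E differentiable (at t)"
        unfolding has_field_derivative_def differentiable_def by blast
    qed
  qed
  have part2: "AE t in lborel. t0 \<le> t \<longrightarrow>
      deriv E t \<le> (2 - lam) * t * \<phi> t - (\<alpha> - lam - 1) * t * (norm (xd t))\<^sup>2"
    using AEgood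
  proof eventually_elim
    case (elim t)
    show ?case
    proof
      assume "t0 \<le> t"
      then obtain Ed where "(E has_real_derivative Ed) (at t)"
        "Ed \<le> (2 - lam) * t * \<phi> t - (\<alpha> - lam - 1) * t * (norm (xd t))\<^sup>2" using goodE elim by blast
      then show "deriv E t \<le> (2 - lam) * t * \<phi> t - (\<alpha> - lam - 1) * t * (norm (xd t))\<^sup>2"
        using DERIV_imp_deriv by metis
    qed
  qed
  have part3: "E T - E t0 \<le> (2 - lam) * integral {t0..T} (\<lambda>s. s * \<phi> s)
      + integral {t0..T} (\<lambda>s. s * (lam + 1 - \<alpha>) * (norm (xd s))\<^sup>2)" if T: "t0 \<le> T" for T
  proof -
    define R1 where "R1 s = s * \<phi> s" for s
    define R2 where "R2 s = s * (lam + 1 - \<alpha>) * (norm (xd s))\<^sup>2" for s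
    define Q where "Q r = (2 - lam) * integral {t0..r} R1 + integral {t0..r} R2" for r
    define H where "H r = E r - Q r" for r
    define I where "I u v = integral {u..v} (\<lambda>s. norm (xdd s))" for u v
    have sub: "{t0..T} \<subseteq> {t0..}" by auto
    have xdc: "continuous_on {t0..T} xd" using continuous_on_subset[OF xdcont sub] .
    have xc: "continuous_on {t0..T} x" using continuous_on_subset[OF xcont sub] .
    have \<phi>c: "continuous_on {t0..T} \<phi>" using continuous_on_subset[OF \<phi>cont sub] .
    have R1c: "continuous_on {t0..T} R1" unfolding R1_def by (intro continuous_intros \<phi>c)
    have R2c: "continuous_on {t0..T} R2" unfolding R2_def by (intro continuous_intros xdc)
    have Qd: "(Q has_vector_derivative ((2 - lam) * R1 s + R2 s)) (at s within {t0..T})" if "s \<in> {t0..T}" for s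
    proof -
      have "((\<lambda>u. integral {t0..u} R1) has_real_derivative R1 s) (at s within {t0..T})"
        using integral_has_vector_derivative[OF R1c that] by (simp add: has_real_derivative_iff_has_vector_derivative)
      moreover have "((\<lambda>u. integral {t0..u} R2) has_real_derivative R2 s) (at s within {t0..T})"
        using integral_has_vector_derivative[OF R2c that] by (simp add: has_real_derivative_iff_has_vector_derivative)
      ultimately have "(Q has_real_derivative ((2 - lam) * R1 s + R2 s)) (at s within {t0..T})"
        unfolding Q_def by (intro DERIV_add DERIV_cmult)
      then show ?thesis by (simp add: has_real_derivative_iff_has_vector_derivative)
    qed
    have nint: "(\<lambda>s. norm (xdd s)) integrable_on {u..v}" if "t0 \<le> u" "u \<le> v" "v \<le> T" for u v
      by (rule integrable_subinterval_real[OF nxddint[OF T]]) (use that in auto)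
    have Ip: "Ipos t0 T I" unfolding Ipos_def I_def
      by (auto intro!: integral_nonneg nint)
    have dQ: "domd t0 T I Q"
      by (rule domd_C1[OF Qd]) (auto intro!: continuous_intros R1c R2c)
    have dX: "domd t0 T I (\<lambda>r. x r - z)"
    proof (rule domd_C1[of t0 T _ xd])
      fix s assume s: "s \<in> {t0..T}"
      have "(x has_vector_derivative xd s) (at s within {t0..T})"
        by (rule has_vector_derivative_within_subset[OF xder sub]) (use s in auto)
      then show "((\<lambda>r. x r - z) has_vector_derivative xd s) (at s within {t0..T})"
        by (intro derivative_eq_intros) auto
    qed (rule xdc)
    have dxd: "domd t0 T I xd"
    proof (rule domdI[of 0 1])
      fix u v assume uv: "t0 \<le> u" "u \<le> v" "v \<le> T"
      define D where "D = xd v - xd u"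
      have "norm D \<le> I u v"
      proof (cases "D = 0")
        case True then show ?thesis using Ip uv by (simp add: Ipos_def)
      next
        case False
        define e where "e = D /\<^sub>R norm D"
        have ne: "norm e = 1" using False by (simp add: e_def)
        have hv: "((\<lambda>s. e \<bullet> xdd s) has_integral e \<bullet> (xd v - xd t0)) {t0..v}"
          using has_integral_linear[OF xddint[of v] bounded_linear_inner_right[of e]] uv by (simp add: o_def)
        have hu: "((\<lambda>s. e \<bullet> xdd s) has_integral e \<bullet> (xd u - xd t0)) {t0..u}"
          using has_integral_linear[OF xddint[of u] bounded_linear_inner_right[of e]] uv by (simp add: o_def)
        have iv: "(\<lambda>s. e \<bullet> xdd s) integrable_on {t0..v}" using hv by blast
        have "integral {t0..u} (\<lambda>s. e \<bullet> xdd s) + integral {u..v} (\<lambda>s. e \<bullet> xdd s) = integral {t0..v} (\<lambda>s. e \<bullet> xdd s)"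
          by (rule Henstock_Kurzweil_Integration.integral_combine) (use uv iv in auto)
        then have "integral {u..v} (\<lambda>s. e \<bullet> xdd s) = e \<bullet> D"
          using integral_unique[OF hv] integral_unique[OF hu] by (simp add: D_def inner_diff_right)
        moreover have "e \<bullet> D = norm D" using False by (simp add: e_def power2_norm_eq_inner[symmetric] power2_eq_square)
        moreover have "integral {u..v} (\<lambda>s. e \<bullet> xdd s) \<le> I u v" unfolding I_def
        proof (rule integral_le)
          show "(\<lambda>s. e \<bullet> xdd s) integrable_on {u..v}"
            by (rule integrable_subinterval_real[OF iv]) (use uv in auto)
          show "(\<lambda>s. norm (xdd s)) integrable_on {u..v}" by (rule nint[OF uv])
          fix s show "e \<bullet> xdd s \<le> norm (xdd s)" using norm_cauchy_schwarz[of e "xdd s"] ne by simp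
        qed
        ultimately show ?thesis by simp
      qed
      then show "norm (xd v - xd u) \<le> 0 * (v - u) + 1 * I u v" by (simp add: D_def)
    qed auto
    have d\<phi>: "domd t0 T I \<phi>"
    proof -
      have "\<forall>i\<in>{..<m}. \<exists>B. B \<ge> 0 \<and> (\<forall>s\<in>{t0..T}. norm (g' i s) \<le> B)"
      proof
        fix i assume "i \<in> {..<m}"
        then have "bnd t0 T (g' i)" using continuous_on_subset[OF g'cont sub] by (intro bnd_cont) auto
        then show "\<exists>B. B \<ge> 0 \<and> (\<forall>s\<in>{t0..T}. norm (g' i s) \<le> B)" unfolding bnd_def by blast
      qed
      then obtain Bf where Bf: "\<And>i. i < m \<Longrightarrow> Bf i \<ge> 0 \<and> (\<forall>s\<in>{t0..T}. norm (g' i s) \<le> Bf i)"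
        using bchoice[of "{..<m}"] by (metis lessThan_iff)
      define B where "B = (\<Sum>i<m. Bf i)"
      have BfB: "Bf i \<le> B" if "i < m" for i
        unfolding B_def using Bf that by (intro member_le_sum) auto
      have gl: "\<bar>g i v - g i u\<bar> \<le> B * (v - u)" if i: "i < m" and uv: "t0 \<le> u" "u \<le> v" "v \<le> T" for i u v
      proof -
        have "norm (g i v - g i u) \<le> B * (v - u)"
        proof (rule lip_deriv[of t0 T "g i" "g' i" B])
          fix s assume s: "s \<in> {t0..T}"
          have "(g i has_real_derivative g' i s) (at s within {t0..})" using gder[OF i] s by auto
          then have "(g i has_real_derivative g' i s) (at s within {t0..T})"
            by (rule DERIV_subset) (rule sub)
          then show "(g i has_vector_derivative g' i s) (at s within {t0..T})"
            by (simp add: has_real_derivative_iff_has_vector_derivative)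
          show "norm (g' i s) \<le> B" using Bf[OF i] BfB[OF i] s by force
        qed (use uv in auto)
        then show ?thesis by simp
      qed
      show ?thesis
      proof (rule domd_lip[of t0 T \<phi> B])
        fix u v assume uv: "t0 \<le> u" "u \<le> v" "v \<le> T"
        have "\<bar>\<phi> v - \<phi> u\<bar> \<le> B * (v - u)" unfolding \<phi>_def
          by (rule Min_bound) (use m gl[OF _ uv] in auto)
        then show "norm (\<phi> v - \<phi> u) \<le> B * (v - u)" by simp
      qed
    qed
    have dsq: "domd t0 T I (\<lambda>r. r\<^sup>2)"
      by (rule domd_C1[of t0 T _ "\<lambda>r. 2 * r"])
        (auto intro!: derivative_eq_intros continuous_intros simp flip: has_real_derivative_iff_has_vector_derivative)
    have did: "domd t0 T I (\<lambda>r. r)"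
      by (rule domd_C1[of t0 T _ "\<lambda>r. 1"])
        (auto intro!: derivative_eq_intros continuous_intros simp flip: has_real_derivative_iff_has_vector_derivative)
    have bsq: "bnd t0 T (\<lambda>r. r\<^sup>2)" by (intro bnd_cont continuous_intros)
    have bid: "bnd t0 T (\<lambda>r. r)" by (intro bnd_cont continuous_intros)
    have b\<phi>: "bnd t0 T \<phi>" by (rule bnd_cont[OF \<phi>c])
    have bxd: "bnd t0 T xd" by (rule bnd_cont[OF xdc])
    have bX: "bnd t0 T (\<lambda>r. x r - z)" by (intro bnd_cont continuous_intros xc)
    have bU: "bnd t0 T U" unfolding U_def by (intro bnd_cont continuous_intros xc xdc)
    have dU: "domd t0 T I U" unfolding U_def
      by (intro domd_add domd_scale dX domd_prod did dxd bid bxd Ip)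
    have dE0: "domd t0 T I (\<lambda>r. r\<^sup>2 * \<phi> r + 1/2 * (norm (U r))\<^sup>2 + \<xi>/2 * (norm (x r - z))\<^sup>2)"
      by (intro domd_add domd_mult dsq d\<phi> bsq b\<phi> Ip domd_cmult domd_norm2 dU bU dX bX)
    have "E = (\<lambda>r. r\<^sup>2 * \<phi> r + 1/2 * (norm (U r))\<^sup>2 + \<xi>/2 * (norm (x r - z))\<^sup>2)"
      using E_eq by auto
    with dE0 have dE: "domd t0 T I E" by simp
    have dH: "domd t0 T I H" unfolding H_def by (intro domd_diff dE dQ)
    then obtain K K' where KK: "K \<ge> 0" "K' \<ge> 0"
      "\<And>u v. t0 \<le> u \<Longrightarrow> u \<le> v \<Longrightarrow> v \<le> T \<Longrightarrow> norm (H v - H u) \<le> K * (v - u) + K' * I u v"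
      using domdE by blast
    define w where "w s = K + K' * norm (xdd s)" for s
    define N where "N = {s. t0 \<le> s \<and> \<not> good s}"
    have negN: "negligible N"
    proof -
      obtain N0 where N0: "{s \<in> space lborel. \<not> (t0 \<le> s \<longrightarrow> good s)} \<subseteq> N0" "emeasure lborel N0 = 0" "N0 \<in> sets lborel"
        using AE_E[OF AEgood] by blast
      have "N0 \<in> null_sets lborel" using N0 by auto
      then have "N0 \<in> null_sets lebesgue" by (rule null_sets_completionI)
      then have "negligible N0" by (simp add: negligible_iff_null_sets)
      moreover have "N \<subseteq> N0" using N0(1) by (auto simp: N_def)
      ultimately show ?thesis by (rule negligible_subset)
    qed
    have "H T \<le> H t0"
    proof (rule mono_ae[OF T negN])
      show "w integrable_on {t0..T}" unfolding w_def
        using integrable_on_cmult_left[OF nxddint[OF T], of K']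
        by (intro integrable_add integrable_const_ivl) simp
      show "0 \<le> w s" if "s \<in> {t0..T}" for s using KK by (simp add: w_def)
      show "H v - H u \<le> integral {u..v} w" if uv: "t0 \<le> u" "u \<le> v" "v \<le> T" for u v
      proof -
        have "integral {u..v} w = K * (v - u) + K' * I u v"
          unfolding w_def I_def using uv nint[OF uv] integrable_on_cmult_left[OF nint[OF uv], of K']
          by (subst integral_add) (auto simp: integral_mult_right)
        then show ?thesis using KK(3)[OF uv] by simp
      qed
      show "\<exists>D\<le>0. (H has_real_derivative D) (at s within {t0..T})" if s: "s \<in> {t0..T} - N" for s
      proof -
        have gs: "good s" using s by (auto simp: N_def)
        obtain Ed where Ed: "(E has_real_derivative Ed) (at s)"
          "Ed \<le> (2 - lam) * s * \<phi> s - (\<alpha> - lam - 1) * s * (norm (xd s))\<^sup>2" using goodE[OF gs] by blast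
        have "(Q has_real_derivative ((2 - lam) * R1 s + R2 s)) (at s within {t0..T})"
          using Qd[of s] s by (simp add: has_real_derivative_iff_has_vector_derivative)
        then have "(H has_real_derivative Ed - ((2 - lam) * R1 s + R2 s)) (at s within {t0..T})"
          unfolding H_def[abs_def] by (intro DERIV_diff has_field_derivative_at_within[OF Ed(1)])
        moreover have "Ed - ((2 - lam) * R1 s + R2 s) \<le> 0"
          using Ed(2) by (simp add: R1_def R2_def algebra_simps)
        ultimately show ?thesis by blast
      qed
    qed
    moreover have "Q t0 = 0" by (simp add: Q_def)
    moreover have "R1 = (\<lambda>s. s * \<phi> s)" "R2 = (\<lambda>s. s * (lam + 1 - \<alpha>) * (norm (xd s))\<^sup>2)"
      by (auto simp: R1_def R2_def)
    ultimately show ?thesis by (simp add: H_def Q_def)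
  qed
  show ?thesis
    unfolding E_def[symmetric] \<phi>_eq
    using part1 part2 part3 by blast
qed
end
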